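(* The constancy atoms $=\!(\vec v)$ and the inconstancy atoms $\neq\!(\vec v)$ are not definable in $\mathbf{FO}(\mathrm{NE},\sqcup)$.
   Context: Team semantics (lax version). For a structure $\mathfrak M$ with domain $M$, a team $X$ is a (possibly empty) set of assignments $s:V\to M$, $V$ a finite set of variables. Satisfaction for formulas in negation normal form: first-order literal $\alpha$: every $s\in X$ satisfies $\alpha$ (Tarski); $\psi\vee\theta$: $X=Y\cup Z$ with $\mathfrak M\models_Y\psi$, $\mathfrak M\models_Z\theta$; $\psi\wedge\theta$: both; $\exists v\psi$: some $F:X\to\mathcal P(M)\setminus\{\emptyset\}$ with $\mathfrak M\models_{X[F/v]}\psi$, $X[F/v]=\{s[m/v]:s\in X,m\in F(s)\}$; $\forall v\psi$: $\mathfrak M\models_{X[M/v]}\psi$, $X[M/v]=\{s[m/v]:s\in X,m\in M\}$. $\mathfrak M\models_X\mathrm{NE}$ iff $X\ne\emptyset$; $\mathfrak M\models_X\phi\sqcup\psi$ iff $\mathfrak M\models_X\phi$ or $\mathfrak M\models_X\psi$. Constancy: $\mathfrak M\models_X=\!(\vec v)$ iff $s(\vec v)=s'(\vec v)$ for all $s,s'\in X$; inconstancy: $\mathfrak M\models_X\neq\!(\vec v)$ iff there are $s,s'\in X$ with $s(\vec v)\ne s'(\vec v)$. An atom $A\vec v$ is definable in a logic $L$ if there is a formula $\theta(\vec v)\in L$ over the empty vocabulary ($\vec v$ distinct variables) with $\mathfrak M\models_XA\vec v\iff\mathfrak M\models_X\theta(\vec v)$ for all structures $\mathfrak M$ and teams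 $X$ whose domain contains $\vec v$. *)

theory Defs
  imports Main
begin

text \<open>Variables are natural numbers. Formulas are in negation normal form; over the
empty vocabulary the first-order literals are equalities and negated equalities of
variables.\<close>

datatype fml =
    Eq nat nat
  | Neq nat nat
  | And fml fml
  | Or fml fml
  | Ex nat fml
  | All nat fml
  | NE
  | Sqcup fml fml

primrec fv :: "fml \<Rightarrow> nat set" where
  "fv (Eq v w) = {v, w}"
| "fv (Neq v w) = {v, w}"
| "fv (And p q) = fv p \<union> fv q"
| "fv (Or p q) = fv p \<union> fv q"
| "fv (Ex v p) = fv p - {v}"
| "fv (All v p) = fv p - {v}"
| "fv NE = {}"
| "fv (Sqcup p q) = fv p \<union> fv q"

text \<open>Assignments are partial maps from variables to the domain (with finite domain of
definition); a team is a set of assignments. A structure over the empty vocabulary is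
just its (nonempty) domain M.\<close>

type_synonym 'a assign = "nat \<rightharpoonup> 'a"
type_synonym 'a team = "'a assign set"

definition team_on :: "'a set \<Rightarrow> nat set \<Rightarrow> 'a team \<Rightarrow> bool" where
  "team_on M V X \<longleftrightarrow> (\<forall>s\<in>X. dom s = V \<and> ran s \<subseteq> M)"

primrec sat :: "'a set \<Rightarrow> 'a team \<Rightarrow> fml \<Rightarrow> bool" where
  "sat M X (Eq v w) \<longleftrightarrow> (\<forall>s\<in>X. s v = s w)"
| "sat M X (Neq v w) \<longleftrightarrow> (\<forall>s\<in>X. s v \<noteq> s w)"
| "sat M X (And p q) \<longleftrightarrow> sat M X p \<and> sat M X q"
| "sat M X (Or p q) \<longleftrightarrow> (\<exists>Y Z. X = Y \<union> Z \<and> sat M Y p \<and> sat M Z q)"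
| "sat M X (Ex v p) \<longleftrightarrow> (\<exists>F. (\<forall>s\<in>X. F s \<noteq> {} \<and> F s \<subseteq> M) \<and>
        sat M {s(v \<mapsto> m) | s m. s \<in> X \<and> m \<in> F s} p)"
| "sat M X (All v p) \<longleftrightarrow> sat M {s(v \<mapsto> m) | s m. s \<in> X \<and> m \<in> M} p"
| "sat M X NE \<longleftrightarrow> X \<noteq> {}"
| "sat M X (Sqcup p q) \<longleftrightarrow> sat M X p \<or> sat M X q"

definition constancy :: "'a team \<Rightarrow> nat list \<Rightarrow> bool" where
  "constancy X vs \<longleftrightarrow> (\<forall>s\<in>X. \<forall>s'\<in>X. map s vs = map s' vs)"

definition inconstancy :: "'a team \<Rightarrow> nat list \<Rightarrow> bool" where
  "inconstancy X vs \<longleftrightarrow> (\<exists>s\<in>X. \<exists>s'\<in>X. map s vs \<noteq> map s' vs)"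

definition definable :: "('a team \<Rightarrow> nat list \<Rightarrow> bool) \<Rightarrow> nat list \<Rightarrow> bool" where
  "definable A vs \<longleftrightarrow> (\<exists>\<theta>. fv \<theta> \<subseteq> set vs \<and>
      (\<forall>(M::'a set) V X. M \<noteq> {} \<longrightarrow> finite V \<longrightarrow> set vs \<subseteq> V \<longrightarrow> team_on M V X \<longrightarrow>
          (A X vs \<longleftrightarrow> sat M X \<theta>)))"

end

theory Submission
  imports Defs
begin

definition tp :: "'a assign \<Rightarrow> (nat \<Rightarrow> nat \<Rightarrow> bool) \<times> nat set" where
  "tp s = ((\<lambda>u w. s u = s w), dom s)"

lemma tp_eqD:
  assumes "tp s = tp t"
  shows "s u = s w \<longleftrightarrow> t u = t w" and "dom s = dom t"
proof -
  have h: "(\<lambda>u w. s u = s w) = (\<lambda>u w. t u = t w)" "dom s = dom t"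
    using assms unfolding tp_def by (simp_all only: prod.inject)
  show "s u = s w \<longleftrightarrow> t u = t w" using fun_cong[OF fun_cong[OF h(1)], of u w] by simp
  show "dom s = dom t" by (rule h(2))
qed

lemma tp_eqI:
  assumes "\<And>u w. s u = s w \<longleftrightarrow> t u = t w" and "dom s = dom t"
  shows "tp s = tp t"
  unfolding tp_def prod.inject using assms(2) by (simp only: assms(1) simp_thms)

lemma ext_lemma:
  assumes inf: "infinite (UNIV :: 'a set)"
    and fin: "finite (dom (t :: 'a assign))"
    and eq: "tp s = tp t"
  shows "\<exists>m'. tp (t(v \<mapsto> m')) = tp (s(v \<mapsto> m))"
proof (cases "\<exists>u. u \<noteq> v \<and> s u = Some m")
  case True
  then obtain u where u: "u \<noteq> v" "s u = Some m" by blast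
  have "u \<in> dom t" using u tp_eqD(2)[OF eq] by auto
  then obtain m' where m': "t u = Some m'" by auto
  have "tp (t(v \<mapsto> m')) = tp (s(v \<mapsto> m))"
  proof (rule tp_eqI)
    fix x y
    have e: "\<And>x y. s x = s y \<longleftrightarrow> t x = t y" using tp_eqD(1)[OF eq] by blast
    show "(t(v \<mapsto> m')) x = (t(v \<mapsto> m')) y \<longleftrightarrow> (s(v \<mapsto> m)) x = (s(v \<mapsto> m)) y"
    proof (cases "x = v"; cases "y = v")
      assume "x = v" "y = v" then show ?thesis by simp
    next
      assume h: "x = v" "y \<noteq> v"
      have "(Some m = s y) = (Some m' = t y)" using e[of u y] u(2) m' by simp
      then show ?thesis using h by simp
    next
      assume h: "x \<noteq> v" "y = v"
      have "(s x = Some m) = (t x = Some m')" using e[of x u] u(2) m' by simp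
      then show ?thesis using h by simp
    next
      assume h: "x \<noteq> v" "y \<noteq> v"
      then show ?thesis using e[of x y] by simp
    qed
  next
    show "dom (t(v \<mapsto> m')) = dom (s(v \<mapsto> m))" using tp_eqD(2)[OF eq] by auto
  qed
  then show ?thesis by blast
next
  case False
  have "finite (ran t)" using fin by (simp add: finite_ran)
  then obtain m' where m': "m' \<notin> ran t" using inf by (meson ex_new_if_finite)
  have "tp (t(v \<mapsto> m')) = tp (s(v \<mapsto> m))"
  proof (rule tp_eqI)
    fix x y
    have e: "\<And>x y. s x = s y \<longleftrightarrow> t x = t y" using tp_eqD(1)[OF eq] by blast
    have n1: "\<And>y. t y \<noteq> Some m'" using m' by (auto simp: ran_def)
    show "(t(v \<mapsto> m')) x = (t(v \<mapsto> m')) y \<longleftrightarrow> (s(v \<mapsto> m)) x = (s(v \<mapsto> m)) y"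
    proof (cases "x = v"; cases "y = v")
      assume "x = v" "y = v" then show ?thesis by simp
    next
      assume h: "x = v" "y \<noteq> v"
      have "Some m \<noteq> s y" using False h(2) by metis
      moreover have "Some m' \<noteq> t y" using n1[of y] by metis
      ultimately show ?thesis using h by simp
    next
      assume h: "x \<noteq> v" "y = v"
      have "s x \<noteq> Some m" using False h(1) by metis
      moreover have "t x \<noteq> Some m'" using n1[of x] by metis
      ultimately show ?thesis using h by simp
    next
      assume h: "x \<noteq> v" "y \<noteq> v"
      then show ?thesis using e[of x y] by simp
    qed
  next
    show "dom (t(v \<mapsto> m')) = dom (s(v \<mapsto> m))" using tp_eqD(2)[OF eq] by auto
  qed
  then show ?thesis by blast
qed

lemma img_restrict:
  assumes "tp ` A \<subseteq> tp ` Y"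
  shows "tp ` A = tp ` {t\<in>Y. tp t \<in> tp ` A}"
proof (rule equalityI)
  show "tp ` A \<subseteq> tp ` {t\<in>Y. tp t \<in> tp ` A}"
  proof (rule subsetI)
    fix x assume x: "x \<in> tp ` A"
    have "x \<in> tp ` Y" using x assms by (rule subsetD[rotated])
    then obtain t where t: "x = tp t" "t \<in> Y" by (rule imageE)
    have "t \<in> {t\<in>Y. tp t \<in> tp ` A}" using t x by simp
    then show "x \<in> tp ` {t\<in>Y. tp t \<in> tp ` A}" unfolding t(1) by (rule imageI)
  qed
next
  show "tp ` {t\<in>Y. tp t \<in> tp ` A} \<subseteq> tp ` A" by (rule subsetI) (erule imageE, simp)
qed

lemma main_inv:
  assumes inf: "infinite (UNIV :: 'a set)"
  shows "\<And>(X :: 'a team) Y. (\<forall>s\<in>X \<union> Y. finite (dom s)) \<Longrightarrow> tp ` X = tp ` Y \<Longrightarrow>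
     sat UNIV X \<phi> \<Longrightarrow> sat UNIV Y \<phi>"
proof (induction \<phi>)
  case (Eq v w)
  show ?case
  proof (simp, intro ballI)
    fix t assume "t \<in> Y"
    then obtain s where "s \<in> X" "tp s = tp t" using Eq.prems(2) by (metis imageE imageI)
    then show "t v = t w" using Eq.prems(3) tp_eqD(1) by fastforce
  qed
next
  case (Neq v w)
  show ?case
  proof (simp, intro ballI)
    fix t assume "t \<in> Y"
    then obtain s where "s \<in> X" "tp s = tp t" using Neq.prems(2) by (metis imageE imageI)
    then show "t v \<noteq> t w" using Neq.prems(3) tp_eqD(1) by fastforce
  qed
next
  case (And p q) then show ?case by auto
next
  case (Sqcup p q) then show ?case by auto
next
  case NE then show ?case by auto
next
  case (Or p q)
  from Or.prems(3) obtain Y1 Z1 where h: "X = Y1 \<union> Z1" "sat UNIV Y1 p" "sat UNIV Z1 q" by auto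
  define Y1' where "Y1' = {t\<in>Y. tp t \<in> tp ` Y1}"
  define Z1' where "Z1' = {t\<in>Y. tp t \<in> tp ` Z1}"
  have "Y = Y1' \<union> Z1'" using Or.prems(2) h(1) unfolding Y1'_def Z1'_def by auto
  moreover have "tp ` Y1 = tp ` Y1'" using img_restrict[of Y1 Y] Or.prems(2) h(1) unfolding Y1'_def by auto
  moreover have "tp ` Z1 = tp ` Z1'" using img_restrict[of Z1 Y] Or.prems(2) h(1) unfolding Z1'_def by auto
  moreover have "\<forall>s\<in>Y1 \<union> Y1'. finite (dom s)" using Or.prems(1) h(1) unfolding Y1'_def by blast
  moreover have "\<forall>s\<in>Z1 \<union> Z1'. finite (dom s)" using Or.prems(1) h(1) unfolding Z1'_def by blast
  ultimately have "Y = Y1' \<union> Z1' \<and> sat UNIV Y1' p \<and> sat UNIV Z1' q"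
    using Or.IH(1)[of Y1 Y1'] Or.IH(2)[of Z1 Z1'] h(2,3) by blast
  then show ?case unfolding sat.simps by blast
next
  case (Ex v p)
  from Ex.prems(3) obtain F where F: "\<forall>s\<in>X. F s \<noteq> {}"
    and sF: "sat UNIV {s(v \<mapsto> m) | s m. s \<in> X \<and> m \<in> F s} p" by auto
  define XF where "XF = {s(v \<mapsto> m) | s m. s \<in> X \<and> m \<in> F s}"
  define G where "G (t::'a assign) = {m'::'a. tp (t(v \<mapsto> m')) \<in> tp ` XF}" for t
  define YG where "YG = {t(v \<mapsto> m) | t m. t \<in> Y \<and> m \<in> G t}"
  have G: "\<forall>t\<in>Y. G t \<noteq> {}"
  proof
    fix t assume t: "t \<in> Y"
    then obtain s where s: "s \<in> X" "tp s = tp t" using Ex.prems(2) by (metis imageE imageI)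
    then obtain m where m: "m \<in> F s" using F by auto
    obtain m' where e: "tp (t(v \<mapsto> m')) = tp (s(v \<mapsto> m))"
      using ext_lemma[OF inf _ s(2)] t Ex.prems(1) by blast
    have "s(v \<mapsto> m) \<in> XF" unfolding XF_def using s m by blast
    then have "m' \<in> G t" unfolding G_def mem_Collect_eq e by (rule imageI)
    then show "G t \<noteq> {}" by auto
  qed
  have "tp ` XF = tp ` YG"
  proof
    show "tp ` YG \<subseteq> tp ` XF" unfolding YG_def G_def by auto
  next
    show "tp ` XF \<subseteq> tp ` YG"
    proof
      fix x assume "x \<in> tp ` XF"
      then obtain s m where sm: "s \<in> X" "m \<in> F s" "x = tp (s(v \<mapsto> m))" unfolding XF_def by auto
      then obtain t where t: "t \<in> Y" "tp t = tp s" using Ex.prems(2) by (metis imageE imageI)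
      obtain m' where m': "tp (t(v \<mapsto> m')) = tp (s(v \<mapsto> m))"
        using ext_lemma[OF inf _ t(2)[symmetric]] t Ex.prems(1) by blast
      have "s(v \<mapsto> m) \<in> XF" unfolding XF_def using sm by blast
      then have "m' \<in> G t" unfolding G_def mem_Collect_eq m' by (rule imageI)
      then have "t(v \<mapsto> m') \<in> YG" unfolding YG_def using t by blast
      then show "x \<in> tp ` YG" using m' sm by (metis imageI)
    qed
  qed
  moreover have "\<forall>s\<in>XF \<union> YG. finite (dom s)"
  proof
    fix s assume "s \<in> XF \<union> YG"
    then obtain s0 m where "s = s0(v \<mapsto> m)" "s0 \<in> X \<union> Y" unfolding XF_def YG_def by blast
    then show "finite (dom s)" using Ex.prems(1) by simp
  qed
  moreover have "sat UNIV XF p" using sF unfolding XF_def .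
  ultimately have "sat UNIV YG p" using Ex.IH by blast
  then have "(\<forall>t\<in>Y. G t \<noteq> {} \<and> G t \<subseteq> UNIV) \<and> sat UNIV {t(v \<mapsto> m) | t m. t \<in> Y \<and> m \<in> G t} p"
    using G unfolding YG_def by simp
  then show ?case unfolding sat.simps by (rule exI[where x=G])
next
  case (All v p)
  define XU where "XU = {s(v \<mapsto> m) | s m. s \<in> X \<and> m \<in> (UNIV::'a set)}"
  define YU where "YU = {s(v \<mapsto> m) | s m. s \<in> Y \<and> m \<in> (UNIV::'a set)}"
  have "tp ` XU = tp ` YU"
  proof
    show "tp ` XU \<subseteq> tp ` YU"
    proof
      fix x assume "x \<in> tp ` XU"
      then obtain s m where sm: "s \<in> X" "x = tp (s(v \<mapsto> m))" unfolding XU_def by auto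
      then obtain t where t: "t \<in> Y" "tp t = tp s" using All.prems(2) by (metis imageE imageI)
      obtain m' where m': "tp (t(v \<mapsto> m')) = tp (s(v \<mapsto> m))"
        using ext_lemma[OF inf _ t(2)[symmetric]] t All.prems(1) by blast
      have "t(v \<mapsto> m') \<in> YU" unfolding YU_def using t by blast
      then show "x \<in> tp ` YU" using m' sm by (metis imageI)
    qed
  next
    show "tp ` YU \<subseteq> tp ` XU"
    proof
      fix x assume "x \<in> tp ` YU"
      then obtain s m where sm: "s \<in> Y" "x = tp (s(v \<mapsto> m))" unfolding YU_def by auto
      then obtain t where t: "t \<in> X" "tp t = tp s" using All.prems(2) by (metis imageE imageI)
      obtain m' where m': "tp (t(v \<mapsto> m')) = tp (s(v \<mapsto> m))"
        using ext_lemma[OF inf _ t(2)[symmetric]] t All.prems(1) by blast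
      have "t(v \<mapsto> m') \<in> XU" unfolding XU_def using t by blast
      then show "x \<in> tp ` XU" using m' sm by (metis imageI)
    qed
  qed
  moreover have "\<forall>s\<in>XU \<union> YU. finite (dom s)"
  proof
    fix s assume "s \<in> XU \<union> YU"
    then obtain s0 m where "s = s0(v \<mapsto> m)" "s0 \<in> X \<union> Y" unfolding XU_def YU_def by blast
    then show "finite (dom s)" using All.prems(1) by simp
  qed
  moreover have "sat UNIV XU p" using All.prems(3) unfolding XU_def by simp
  ultimately have "sat UNIV YU p" using All.IH by blast
  then show ?case unfolding sat.simps YU_def[symmetric] .
qed

theorem mainTheorem17:
  fixes vs :: "nat list"
  assumes "infinite (UNIV :: 'a set)"
    and "vs \<noteq> []"
    and "distinct vs"
  shows "\<not> definable (constancy :: 'a team \<Rightarrow> nat list \<Rightarrow> bool) vs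
       \<and> \<not> definable (inconstancy :: 'a team \<Rightarrow> nat list \<Rightarrow> bool) vs"
proof -
  obtain a :: 'a where True by simp
  obtain b :: 'a where "b \<notin> {a}" using ex_new_if_finite[OF assms(1)] by blast
  then have ab: "a \<noteq> b" by simp
  define sa :: "'a assign" where "sa = (\<lambda>u. if u \<in> set vs then Some a else None)"
  define sb :: "'a assign" where "sb = (\<lambda>u. if u \<in> set vs then Some b else None)"
  define X where "X = {sa}"
  define Y where "Y = {sa, sb}"
  have dsa: "dom sa = set vs" unfolding sa_def by (auto split: if_splits)
  have dsb: "dom sb = set vs" unfolding sb_def by (auto split: if_splits)
  have tpab: "tp sb = tp sa"
    apply (rule tp_eqI) apply (simp add: sa_def sb_def) using dsa dsb by simp
  have fin: "\<forall>s\<in>X \<union> Y. finite (dom s)" unfolding X_def Y_def using dsa dsb by auto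
  have tXY: "tp ` X = tp ` Y" unfolding X_def Y_def using tpab by auto
  have ton: "team_on (UNIV::'a set) (set vs) X" "team_on (UNIV::'a set) (set vs) Y"
    unfolding team_on_def X_def Y_def using dsa dsb by auto
  obtain v vs' where vs: "vs = v # vs'" using assms(2) by (cases vs) auto
  have neq: "map sa vs \<noteq> map sb vs" using ab unfolding vs sa_def sb_def by auto
  have cX: "constancy X vs" unfolding constancy_def X_def by auto
  have cY: "\<not> constancy Y vs" unfolding constancy_def Y_def using neq by auto
  have iX: "\<not> inconstancy X vs" unfolding inconstancy_def X_def by auto
  have iY: "inconstancy Y vs" unfolding inconstancy_def Y_def using neq by auto
  have "\<not> definable (constancy :: 'a team \<Rightarrow> nat list \<Rightarrow> bool) vs"
  proof
    assume "definable (constancy :: 'a team \<Rightarrow> nat list \<Rightarrow> bool) vs"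
    then obtain \<theta> where th: "\<forall>(M::'a set) V X. M \<noteq> {} \<longrightarrow> finite V \<longrightarrow> set vs \<subseteq> V \<longrightarrow> team_on M V X \<longrightarrow>
          (constancy X vs \<longleftrightarrow> sat M X \<theta>)" unfolding definable_def by blast
    have "sat UNIV X \<theta>" using th ton cX by blast
    then have "sat UNIV Y \<theta>" using main_inv[OF assms(1) _ tXY] fin by blast
    then show False using th ton cY by blast
  qed
  moreover have "\<not> definable (inconstancy :: 'a team \<Rightarrow> nat list \<Rightarrow> bool) vs"
  proof
    assume "definable (inconstancy :: 'a team \<Rightarrow> nat list \<Rightarrow> bool) vs"
    then obtain \<theta> where th: "\<forall>(M::'a set) V X. M \<noteq> {} \<longrightarrow> finite V \<longrightarrow> set vs \<subseteq> V \<longrightarrow> team_on M V X \<longrightarrow>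
          (inconstancy X vs \<longleftrightarrow> sat M X \<theta>)" unfolding definable_def by blast
    have "sat UNIV Y \<theta>" using th ton iY by blast
    then have "sat UNIV X \<theta>" using main_inv[OF assms(1) _ tXY[symmetric]] fin by blast
    then show False using th ton iX by blast
  qed
  ultimately show ?thesis by blast
qed

end
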